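(* Let $q\in\mathbb{C}$ with $0<|q|\le 1$ and $A,B\in M_n$. (a) If $A,B\in\Pi^n_{s,\alpha}$ for some $\alpha\in[0,\pi/2)$, then $|q|^2 w_q(AB)\le \sec^2(\alpha)\, w_q(A)\,w_q(B)$. (b) If $A$ and $B$ are positive matrices, then $|q|^2 w_q(AB)\le w_q(A)\,w_q(B)$.
   Context: $M_n$ is the algebra of complex $n\times n$ matrices. For $|q|\le1$, $w_q(A)=\sup\{|\langle Ax,y\rangle|: \|x\|=\|y\|=1,\ \langle x,y\rangle=q\}$. For $\alpha\in[0,\pi/2)$, $S_\alpha=\{z:\operatorname{Re}z>0,\ |\operatorname{Im}z|\le\tan(\alpha)\operatorname{Re}z\}$ and $\Pi^n_{s,\alpha}=\{A\in M_n: W(A)\subseteq S_\alpha\}$, where $W(A)=\{\langle Ax,x\rangle:\|x\|=1\}$. Positive matrices are those in $\Pi^n_{s,0}$, i.e. positive definite matrices. *)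

theory Defs
  imports "HOL-Analysis.Analysis"
begin

text \<open>Matrices in M_n are complex^'n^'n for a finite index type 'n.
  Standard inner product on C^n, linear in the first argument.\<close>

definition cinner :: "complex^'n \<Rightarrow> complex^'n \<Rightarrow> complex" where
  "cinner x y = (\<Sum>i\<in>UNIV. x $ i * cnj (y $ i))"

text \<open>q-numerical radius. The supremum is taken over a set of nonnegative reals;
  we use the convention that the supremum of the empty set is 0 (relevant only
  when n = 1 and |q| < 1).\<close>

definition qnumradius :: "complex \<Rightarrow> complex^'n^'n \<Rightarrow> real" where
  "qnumradius q A = Sup (insert 0 {cmod (cinner (A *v x) y) | x y.
       norm x = 1 \<and> norm y = 1 \<and> cinner x y = q})"

definition numrange :: "complex^'n^'n \<Rightarrow> complex set" where
  "numrange A = {cinner (A *v x) x | x. norm x = 1}"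

definition sector :: "real \<Rightarrow> complex set" where
  "sector \<alpha> = {z. Re z > 0 \<and> \<bar>Im z\<bar> \<le> tan \<alpha> * Re z}"

definition Pi_s :: "real \<Rightarrow> (complex^'n^'n) set" where
  "Pi_s \<alpha> = {A. numrange A \<subseteq> sector \<alpha>}"

end

theory Submission
  imports Defs
begin

lemma mv_smult: "A *v (c *s x) = c *s (A *v (x::complex^'n))"
  by (simp add: vec_eq_iff matrix_vector_mult_def sum_distrib_left mult_ac)

lemma mv_add: "A *v (x + y) = A *v x + A *v (y::complex^'n)"
  by (simp add: matrix_vector_right_distrib)

lemma cinner_add_left: "cinner (x + y) z = cinner x z + cinner y z"
  by (simp add: cinner_def distrib_right sum.distrib)

lemma cinner_add_right: "cinner x (y + z) = cinner x y + cinner x z"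
  by (simp add: cinner_def distrib_left sum.distrib)

lemma cinner_smult_left: "cinner (c *s x) y = c * cinner x y"
  by (simp add: cinner_def sum_distrib_left mult_ac)

lemma cinner_smult_right: "cinner x (c *s y) = cnj c * cinner x y"
  by (simp add: cinner_def sum_distrib_left mult_ac)

lemma cinner_commute: "cinner x y = cnj (cinner y x)"
  by (simp add: cinner_def mult.commute)

lemma cinner_zero_left[simp]: "cinner 0 y = 0" by (simp add: cinner_def)
lemma cinner_zero_right[simp]: "cinner x 0 = 0" by (simp add: cinner_def)

lemma cinner_self: "cinner x x = complex_of_real ((norm x)^2)"
proof -
  have "(norm x)^2 = (\<Sum>i\<in>UNIV. (cmod (x$i))^2)"
    by (simp add: norm_vec_def L2_set_def sum_nonneg)
  moreover have "cinner x x = (\<Sum>i\<in>UNIV. complex_of_real ((cmod (x$i))^2))"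
    unfolding cinner_def by (intro sum.cong refl) (metis complex_norm_square)
  ultimately show ?thesis by simp
qed

lemma norm_smult_c: "norm (c *s (x::complex^'n)) = cmod c * norm x"
proof -
  have "norm (c *s x) = sqrt (\<Sum>i\<in>UNIV. (cmod c)^2 * (cmod (x$i))^2)"
    by (simp add: norm_vec_def L2_set_def norm_mult power_mult_distrib)
  also have "\<dots> = sqrt ((cmod c)^2 * (\<Sum>i\<in>UNIV. (cmod (x$i))^2))"
    by (simp add: sum_distrib_left)
  also have "\<dots> = cmod c * norm x"
    by (simp add: real_sqrt_mult norm_vec_def L2_set_def)
  finally show ?thesis .
qed

definition fa :: "complex^'n^'n \<Rightarrow> complex^'n \<Rightarrow> complex^'n \<Rightarrow> complex" where
  "fa A x y = cinner (A *v x) y"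

lemma fa_expand: "fa A (x + c *s y) (x + c *s y)
   = fa A x x + c * fa A y x + cnj c * fa A x y + c * cnj c * fa A y y"
  by (simp add: fa_def mv_add mv_smult cinner_add_left cinner_add_right
       cinner_smult_left cinner_smult_right algebra_simps)

lemma fa_scale: "fa A (c *s x) (c *s x) = c * cnj c * fa A x x"
  using fa_expand[of A 0 c x] by (simp add: fa_def)

lemma cs_form:
  fixes g :: "complex^'n \<Rightarrow> complex^'n \<Rightarrow> complex"
  assumes ex: "\<And>x y c. g (x + c *s y) (x + c *s y) = g x x + c * g y x + cnj c * g x y + c * cnj c * g y y"
    and herm: "\<And>x y. g y x = cnj (g x y)"
    and psd: "\<And>z. 0 \<le> Re (g z z)"
  shows "(cmod (g x y))^2 \<le> Re (g x x) * Re (g y y)"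
proof -
  define b where "b = g x y"
  define m where "m = (cmod b)^2"
  define P where "P = Re (g x x)"
  define R where "R = Re (g y y)"
  have P0: "0 \<le> P" "0 \<le> R" using psd by (auto simp: P_def R_def)
  have bb: "b * cnj b = complex_of_real m" by (metis complex_norm_square m_def)
  have key: "0 \<le> P - 2*t*m + t^2*m*R" for t :: real
  proof -
    define c where "c = - (complex_of_real t * b)"
    have "0 \<le> Re (g (x + c *s y) (x + c *s y))" by (rule psd)
    also have "g (x + c *s y) (x + c *s y) = g x x + c * cnj b + cnj c * b + c * cnj c * g y y"
      using ex herm b_def by metis
    also have "c * cnj b = - complex_of_real (t*m)" using bb by (simp add: c_def)
    also have "cnj c * b = - complex_of_real (t*m)" using bb by (simp add: c_def mult_ac)
    also have "c * cnj c = complex_of_real (t^2*m)" using bb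
      by (simp add: c_def power2_eq_square mult_ac)
    finally show ?thesis by (simp add: P_def R_def power2_eq_square mult_ac)
  qed
  have m0: "0 \<le> m" by (simp add: m_def)
  have "m \<le> P * R"
  proof (cases "m = 0")
    case True thus ?thesis using P0 by simp
  next
    case False
    hence mp: "0 < m" using m0 by simp
    show ?thesis
    proof (cases "R = 0")
      case True
      have "0 \<le> P - 2*((P/m+1))*m" using key[of "P/m+1"] True by simp
      also have "\<dots> = -P - 2*m" using mp by (simp add: field_simps)
      finally show ?thesis using P0 mp by simp
    next
      case False
      hence Rp: "0 < R" using P0 by simp
      have "0 \<le> P - 2*(1/R)*m + (1/R)^2*m*R" by (rule key)
      also have "\<dots> = P - m/R" using Rp by (simp add: field_simps power2_eq_square)
      finally show ?thesis using Rp by (simp add: field_simps)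
    qed
  qed
  thus ?thesis by (simp add: m_def b_def P_def R_def)
qed

definition gf :: "complex \<Rightarrow> complex^'n^'n \<Rightarrow> complex^'n \<Rightarrow> complex^'n \<Rightarrow> complex" where
  "gf w A x y = (w * fa A x y + cnj w * cnj (fa A y x)) / 2"

lemma gf_expand: "gf w A (x + c *s y) (x + c *s y)
   = gf w A x x + c * gf w A y x + cnj c * gf w A x y + c * cnj c * gf w A y y"
  unfolding gf_def fa_expand by (simp add: field_simps)

lemma gf_herm: "gf w A y x = cnj (gf w A x y)"
  unfolding gf_def by (simp add: algebra_simps)

lemma gf_diag: "Re (gf w A z z) = Re (w * fa A z z)"
  unfolding gf_def by simp

lemma gf_cs:
  assumes "\<And>z. 0 \<le> Re (w * fa A z z)"
  shows "(cmod (gf w A x y))^2 \<le> Re (gf w A x x) * Re (gf w A y y)"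
  by (rule cs_form[OF gf_expand gf_herm], subst gf_diag, rule assms)

lemma real_cs2:
  fixes u v p1 p2 q1 q2 :: real
  assumes "0 \<le> u" "0 \<le> v" "0 \<le> p1" "0 \<le> p2" "0 \<le> q1" "0 \<le> q2"
    "u^2 \<le> p1*q1" "v^2 \<le> p2*q2"
  shows "(u+v)^2 \<le> (p1+p2)*(q1+q2)"
proof -
  have "(u * v)^2 \<le> (p1*q1)*(p2*q2)"
    using assms by (simp add: power_mult_distrib mult_mono)
  also have "\<dots> = (p1*q2)*(p2*q1)" by simp
  finally have h: "(u * v)^2 \<le> (p1*q2)*(p2*q1)" .
  have "(2*(u * v))^2 \<le> (p1*q2+p2*q1)^2"
  proof -
    have "(2*(u * v))^2 = 4*(u * v)^2" by (simp add: power2_eq_square)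
    also have "\<dots> \<le> 4*((p1*q2)*(p2*q1))" using h by simp
    also have "\<dots> \<le> (p1*q2+p2*q1)^2"
      using sum_squares_ge_zero[of "p1*q2 - p2*q1" 0] by (simp add: power2_eq_square algebra_simps)
    finally show ?thesis .
  qed
  hence "2*(u * v) \<le> p1*q2+p2*q1"
    by (rule power2_le_imp_le) (use assms in simp)
  thus ?thesis using assms by (simp add: power2_eq_square algebra_simps)
qed

lemma sector_pos:
  assumes a0: "0 < \<alpha>" and a1: "\<alpha> < pi/2"
    and hyp: "\<And>z. norm z = 1 \<Longrightarrow> fa A z z \<in> sector \<alpha>"
  shows "0 \<le> Re (Complex (sin \<alpha>) (cos \<alpha>) * fa A z z) \<and> 0 \<le> Re (Complex (sin \<alpha>) (- cos \<alpha>) * fa A z z) \<and> 0 \<le> Re (fa A z z)"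
proof (cases "z = 0")
  case True thus ?thesis by (simp add: fa_def)
next
  case False
  define r where "r = norm z"
  have rp: "0 < r" using False by (simp add: r_def)
  define u where "u = complex_of_real (1/r) *s z"
  have nu: "norm u = 1" using rp by (simp add: u_def norm_smult_c r_def norm_divide)
  have zu: "z = complex_of_real r *s u" using rp by (simp add: u_def vector_smult_assoc)
  have fz: "fa A z z = complex_of_real (r^2) * fa A u u"
    unfolding zu fa_scale by (simp add: power2_eq_square)
  define w where "w = fa A u u"
  have ws: "Re w > 0" "\<bar>Im w\<bar> \<le> tan \<alpha> * Re w" using hyp[OF nu] by (auto simp: sector_def w_def)
  have c0: "cos \<alpha> > 0" using a0 a1 by (simp add: cos_gt_zero_pi)
  have "cos \<alpha> * \<bar>Im w\<bar> \<le> cos \<alpha> * (tan \<alpha> * Re w)" using ws c0 by (simp add: mult_left_mono)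
  also have "\<dots> = sin \<alpha> * Re w" using c0 by (simp add: tan_def)
  finally have h: "cos \<alpha> * \<bar>Im w\<bar> \<le> sin \<alpha> * Re w" .
  have "cos \<alpha> * Im w \<le> cos \<alpha> * \<bar>Im w\<bar>" by (rule mult_left_mono) (use c0 in auto)
  moreover have "cos \<alpha> * (- Im w) \<le> cos \<alpha> * \<bar>Im w\<bar>" by (rule mult_left_mono) (use c0 in auto)
  ultimately have "cos \<alpha> * Im w \<le> sin \<alpha> * Re w" "- (cos \<alpha> * Im w) \<le> sin \<alpha> * Re w"
    using h by linarith+
  hence "0 \<le> r^2 * (sin \<alpha> * Re w - cos \<alpha> * Im w)" "0 \<le> r^2 * (sin \<alpha> * Re w + cos \<alpha> * Im w)"
    by simp_all
  moreover have "0 \<le> r^2 * Re w" using ws by simp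
  ultimately show ?thesis unfolding fz w_def[symmetric] by (simp add: algebra_simps)
qed

lemma key_ineq:
  assumes a0: "0 < \<alpha>" and a1: "\<alpha> < pi/2"
    and hyp: "\<And>z. norm z = 1 \<Longrightarrow> fa A z z \<in> sector \<alpha>"
  shows "(cmod (fa A x y))^2 * (cos \<alpha>)^2 \<le> Re (fa A x x) * Re (fa A y y)"
proof -
  define s where "s = sin \<alpha>"
  define c where "c = cos \<alpha>"
  have sp: "s > 0" using a0 a1 by (simp add: s_def sin_gt_zero)
  have cp: "c > 0" using a0 a1 by (simp add: c_def cos_gt_zero_pi)
  have sc: "s^2 + c^2 = 1" by (simp add: s_def c_def)
  define \<omega> where "\<omega> = Complex s c"
  have cw: "cnj \<omega> = Complex s (- c)" by (simp add: \<omega>_def complex_eq_iff)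
  have pos: "\<And>z. 0 \<le> Re (\<omega> * fa A z z)" "\<And>z. 0 \<le> Re (cnj \<omega> * fa A z z)"
    "\<And>z. 0 \<le> Re (fa A z z)"
    using sector_pos[OF a0 a1 hyp] by (simp_all add: \<omega>_def s_def c_def complex_cnj)
  define g1 where "g1 = gf \<omega> A x y"
  define g2 where "g2 = gf (cnj \<omega>) A x y"
  have cs1: "(cmod g1)^2 \<le> Re (gf \<omega> A x x) * Re (gf \<omega> A y y)"
    unfolding g1_def by (rule gf_cs) (rule pos)
  have cs2: "(cmod g2)^2 \<le> Re (gf (cnj \<omega>) A x x) * Re (gf (cnj \<omega>) A y y)"
    unfolding g2_def by (rule gf_cs) (rule pos)
  have ww: "\<omega> * cnj \<omega> = 1" using sc by (simp add: \<omega>_def complex_eq_iff power2_eq_square)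
  have ident: "\<omega> * g1 - cnj \<omega> * g2 = (\<omega>^2 - (cnj \<omega>)^2) / 2 * fa A x y"
    unfolding g1_def g2_def gf_def using ww by (simp add: field_simps power2_eq_square)
  have w2: "(\<omega>^2 - (cnj \<omega>)^2) / 2 = complex_of_real (2 * s * c) * \<i>"
    by (simp add: \<omega>_def complex_eq_iff power2_eq_square)
  have nw: "cmod \<omega> = 1" using sc by (simp add: \<omega>_def complex_norm)
  have "2 * s * c * cmod (fa A x y) = cmod (\<omega> * g1 - cnj \<omega> * g2)"
    unfolding ident w2 using sp cp by (simp add: norm_mult)
  also have "\<dots> \<le> cmod g1 + cmod g2"
    using norm_triangle_ineq4[of "\<omega> * g1" "cnj \<omega> * g2"] nw by (simp add: norm_mult)
  finally have t1: "2 * s * c * cmod (fa A x y) \<le> cmod g1 + cmod g2" .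
  have d: "\<And>z. Re (gf \<omega> A z z) + Re (gf (cnj \<omega>) A z z) = 2 * s * Re (fa A z z)"
    by (simp add: gf_diag \<omega>_def)
  have "(cmod g1 + cmod g2)^2 \<le> (Re (gf \<omega> A x x) + Re (gf (cnj \<omega>) A x x)) * (Re (gf \<omega> A y y) + Re (gf (cnj \<omega>) A y y))"
    by (rule real_cs2[OF _ _ _ _ _ _ cs1 cs2]) (simp_all only: gf_diag pos norm_ge_zero)
  also have "\<dots> = (2 * s)^2 * (Re (fa A x x) * Re (fa A y y))" unfolding d by (simp add: power2_eq_square)
  finally have t2: "(cmod g1 + cmod g2)^2 \<le> (2 * s)^2 * (Re (fa A x x) * Re (fa A y y))" .
  have "(2 * s)^2 * ((cmod (fa A x y))^2 * c^2) = (2 * s * c * cmod (fa A x y))^2" by (simp add: power2_eq_square)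
  also have "\<dots> \<le> (cmod g1 + cmod g2)^2" using t1 sp cp by (simp add: power_mono)
  finally have "(2 * s)^2 * ((cmod (fa A x y))^2 * c^2) \<le> (2 * s)^2 * (Re (fa A x x) * Re (fa A y y))" using t2 by linarith
  thus ?thesis using sp by (simp add: c_def)
qed

lemma homog:
  assumes "\<And>z. norm z = 1 \<Longrightarrow> Re (fa A z z) \<le> M"
  shows "Re (fa A z z) \<le> M * (norm z)^2"
proof (cases "z = 0")
  case True thus ?thesis by (simp add: fa_def)
next
  case False
  define r where "r = norm z"
  have rp: "0 < r" using False by (simp add: r_def)
  define u where "u = complex_of_real (1/r) *s z"
  have nu: "norm u = 1" using rp by (simp add: u_def norm_smult_c r_def norm_divide)
  have zu: "z = complex_of_real r *s u" using rp by (simp add: u_def vector_smult_assoc)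
  have fz: "fa A z z = complex_of_real (r^2) * fa A u u"
    unfolding zu fa_scale by (simp add: power2_eq_square)
  have "r^2 * Re (fa A u u) \<le> r^2 * M" using assms[OF nu] by (simp add: mult_left_mono)
  thus ?thesis unfolding fz by (simp add: r_def mult_ac)
qed

lemma sq_le_imp:
  fixes a b :: real
  assumes "a^2 \<le> b^2" "0 \<le> b" shows "a \<le> b"
  using assms abs_le_square_iff[of a b] by (metis abs_ge_self abs_of_nonneg order_trans)

lemma bound_AB:
  assumes a0: "0 < \<alpha>" and a1: "\<alpha> < pi/2"
    and hA: "\<And>z. norm z = 1 \<Longrightarrow> fa A z z \<in> sector \<alpha>"
    and hB: "\<And>z. norm z = 1 \<Longrightarrow> fa B z z \<in> sector \<alpha>"
    and MA: "\<And>z. norm z = 1 \<Longrightarrow> Re (fa A z z) \<le> MA"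
    and MB: "\<And>z. norm z = 1 \<Longrightarrow> Re (fa B z z) \<le> MB"
    and nx: "norm x = 1" and ny: "norm y = 1"
  shows "cmod (fa (A ** B) x y) * (cos \<alpha>)^2 \<le> MA * MB"
proof -
  define c where "c = cos \<alpha>"
  have cp: "c > 0" using a0 a1 by (simp add: c_def cos_gt_zero_pi)
  have posA: "\<And>z. 0 \<le> Re (fa A z z)" and posB: "\<And>z. 0 \<le> Re (fa B z z)"
    using sector_pos[OF a0 a1 hA] sector_pos[OF a0 a1 hB] by blast+
  have MA0: "0 \<le> MA" using posA[of y] MA[OF ny] by linarith
  have MB0: "0 \<le> MB" using posB[of x] MB[OF nx] by linarith
  define v where "v = B *v x"
  have e1: "fa (A ** B) x y = fa A v y" by (simp add: fa_def v_def matrix_vector_mul_assoc)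
  have "(cmod (fa A v y) * c)^2 = (cmod (fa A v y))^2 * c^2" by (simp add: power_mult_distrib)
  also have "\<dots> \<le> Re (fa A v v) * Re (fa A y y)" unfolding c_def by (rule key_ineq[OF a0 a1 hA])
  also have "\<dots> \<le> (MA * (norm v)^2) * MA"
    by (rule mult_mono[OF homog[OF MA] MA[OF ny]]) (use MA0 posA in auto)
  also have "\<dots> = (MA * norm v)^2" by (simp add: power2_eq_square)
  finally have t1: "cmod (fa A v y) * c \<le> MA * norm v" by (rule sq_le_imp) (use MA0 in simp)
  have fv: "fa B x v = complex_of_real ((norm v)^2)" by (simp add: fa_def v_def[symmetric] cinner_self)
  have "(norm v * c)^2 * (norm v)^2 = (cmod (fa B x v))^2 * c^2"
    proof -
      have "cmod (fa B x v) = (norm v)^2" unfolding fv norm_of_real by simp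
      thus ?thesis by (simp add: power_mult_distrib power2_eq_square)
    qed
  also have "\<dots> \<le> Re (fa B x x) * Re (fa B v v)" unfolding c_def by (rule key_ineq[OF a0 a1 hB])
  also have "\<dots> \<le> MB * (MB * (norm v)^2)"
    by (rule mult_mono[OF MB[OF nx] homog[OF MB]]) (use MB0 posB in auto)
  also have "\<dots> = MB^2 * (norm v)^2" by (simp add: power2_eq_square)
  finally have "(norm v * c)^2 * (norm v)^2 \<le> MB^2 * (norm v)^2" .
  hence t2: "norm v * c \<le> MB"
  proof (cases "norm v = 0")
    case True thus ?thesis using MB0 by simp
  next
    case False
    assume "(norm v * c)^2 * (norm v)^2 \<le> MB^2 * (norm v)^2"
    hence "(norm v * c)^2 \<le> MB^2" using False by simp
    thus ?thesis by (rule sq_le_imp) (rule MB0)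
  qed
  have "cmod (fa A v y) * c^2 = (cmod (fa A v y) * c) * c" by (simp add: power2_eq_square)
  also have "\<dots> \<le> (MA * norm v) * c" using t1 cp by (simp add: mult_right_mono)
  also have "\<dots> = MA * (norm v * c)" by simp
  also have "\<dots> \<le> MA * MB" using t2 MA0 by (simp add: mult_left_mono)
  finally show ?thesis unfolding e1 c_def .
qed

lemma cinner_axis: "cinner z (axis i 1) = z $ i"
  by (simp add: cinner_def axis_def if_distrib cong: if_cong)

lemma orth_exists:
  fixes z :: "complex^'n"
  assumes "2 \<le> CARD('n)"
  shows "\<exists>e. cinner z e = 0 \<and> norm e = 1"
proof -
  obtain i j :: 'n where ij: "i \<noteq> j"
  proof -
    obtain i :: 'n where True by simp
    have "\<exists>j. j \<noteq> i"
    proof (rule ccontr)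
      assume "\<not> ?thesis"
      hence "UNIV = {i}" by auto
      hence "CARD('n) = card {i}" by (rule arg_cong[where f=card])
      thus False using assms by simp
    qed
    thus ?thesis using that by blast
  qed
  have nrm: "norm e = 1" if "cinner e e = 1" for e :: "complex^'n"
  proof -
    have "(norm e)^2 = 1" using that cinner_self[of e] by (metis of_real_eq_1_iff)
    thus ?thesis using norm_ge_zero[of e] by (simp add: power2_eq_1_iff)
  qed
  show ?thesis
  proof (cases "z $ i = 0")
    case True
    have "cinner (axis i (1::complex)) (axis i 1) = 1" by (simp add: cinner_axis)
    thus ?thesis using True nrm cinner_axis[of z i] by metis
  next
    case False
    define e0 where "e0 = cnj (z $ j) *s axis i (1::complex) + (- cnj (z $ i)) *s axis j 1"
    have c0: "cinner z e0 = 0"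
      unfolding e0_def cinner_add_right cinner_smult_right cinner_axis by simp
    have "e0 $ j = - cnj (z $ i)" using ij by (simp add: e0_def axis_def)
    hence "e0 \<noteq> 0" using False by auto
    hence np: "norm e0 > 0" by simp
    define e where "e = complex_of_real (1 / norm e0) *s e0"
    have "norm e = 1" using np by (simp add: e_def norm_smult_c norm_divide)
    moreover have "cinner z e = 0" by (simp add: e_def cinner_smult_right c0)
    ultimately show ?thesis by blast
  qed
qed

lemma cinner_bound: "norm y = 1 \<Longrightarrow> cmod (cinner u y) \<le> (\<Sum>i\<in>UNIV. cmod (u $ i))"
proof -
  assume ny: "norm y = 1"
  have "cmod (cinner u y) \<le> (\<Sum>i\<in>UNIV. cmod (u $ i * cnj (y $ i)))"
    unfolding cinner_def by (rule norm_sum)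
  also have "\<dots> \<le> (\<Sum>i\<in>UNIV. cmod (u $ i))"
  proof (rule sum_mono)
    fix i
    have "cmod (y $ i) \<le> 1" using Finite_Cartesian_Product.norm_nth_le[of y i] ny by simp
    thus "cmod (u $ i * cnj (y $ i)) \<le> cmod (u $ i)"
      by (simp add: norm_mult mult_left_le)
  qed
  finally show ?thesis .
qed

lemma mv_bound: "norm x = 1 \<Longrightarrow> cmod ((A *v x) $ i) \<le> (\<Sum>j\<in>UNIV. cmod (A $ i $ j))"
proof -
  assume nx: "norm x = 1"
  have "cmod ((A *v x) $ i) \<le> (\<Sum>j\<in>UNIV. cmod (A $ i $ j * x $ j))"
    unfolding matrix_vector_mult_def by (simp add: norm_sum)
  also have "\<dots> \<le> (\<Sum>j\<in>UNIV. cmod (A $ i $ j))"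
  proof (rule sum_mono)
    fix j
    have "cmod (x $ j) \<le> 1" using Finite_Cartesian_Product.norm_nth_le[of x j] nx by simp
    thus "cmod (A $ i $ j * x $ j) \<le> cmod (A $ i $ j)"
      by (simp add: norm_mult mult_left_le)
  qed
  finally show ?thesis .
qed

lemma wq_bdd: "bdd_above (insert 0 {cmod (cinner (A *v x) y) | x y.
       norm x = 1 \<and> norm y = 1 \<and> cinner x y = q})"
proof (rule bdd_aboveI)
  fix r assume "r \<in> insert 0 {cmod (cinner (A *v x) y) | x y.
       norm x = 1 \<and> norm y = 1 \<and> cinner x y = q}"
  thus "r \<le> (\<Sum>i\<in>UNIV. \<Sum>j\<in>UNIV. cmod (A $ i $ j))"
  proof
    assume "r = 0" thus ?thesis by (simp add: sum_nonneg)
  next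
    assume "r \<in> {cmod (cinner (A *v x) y) | x y. norm x = 1 \<and> norm y = 1 \<and> cinner x y = q}"
    then obtain x y where r: "r = cmod (cinner (A *v x) y)" "norm x = 1" "norm y = 1" by blast
    have "r \<le> (\<Sum>i\<in>UNIV. cmod ((A *v x) $ i))" using r cinner_bound by simp
    also have "\<dots> \<le> (\<Sum>i\<in>UNIV. \<Sum>j\<in>UNIV. cmod (A $ i $ j))"
      by (rule sum_mono) (rule mv_bound[OF r(2)])
    finally show ?thesis .
  qed
qed

lemma wq_upper: "norm x = 1 \<Longrightarrow> norm y = 1 \<Longrightarrow> cinner x y = q \<Longrightarrow> cmod (fa A x y) \<le> qnumradius q A"
  unfolding qnumradius_def fa_def by (rule cSup_upper[OF _ wq_bdd]) blast

lemma wq_nonneg: "0 \<le> qnumradius q A"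
  unfolding qnumradius_def by (rule cSup_upper[OF _ wq_bdd]) blast

lemma wq_Q:
  assumes q1: "cmod q \<le> 1" and card: "cmod q = 1 \<or> 2 \<le> CARD('n)"
    and nz: "norm (z::complex^'n) = 1"
  shows "cmod q * cmod (fa A z z) \<le> qnumradius q A"
proof -
  define s where "s = sqrt (1 - (cmod q)^2)"
  have s2: "s^2 = 1 - (cmod q)^2" using q1 by (simp add: s_def power_le_one)
  obtain e where e: "cinner z e = 0" "s^2 * (norm e)^2 = s^2"
  proof (cases "cmod q = 1")
    case True
    hence "s = 0" by (simp add: s_def)
    thus ?thesis using that[of 0] by simp
  next
    case False
    hence "2 \<le> CARD('n)" using card by simp
    thus ?thesis using that orth_exists[of z] by fastforce
  qed
  have zz: "cinner z z = 1" using nz by (simp add: cinner_self)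
  have ee: "cinner e e = complex_of_real ((norm e)^2)" by (rule cinner_self)
  have ez: "cinner e z = 0" using e(1) cinner_commute[of e z] by simp
  have y_ok: "norm y = 1 \<and> cinner z y = q" if yd: "y = cnj q *s z + t *s e" and tt: "t * cnj t = complex_of_real (s^2)" for t y
  proof -
    have "cinner y y = fa (mat 1) (cnj q *s z + t *s e) (cnj q *s z + t *s e)"
      by (simp add: fa_def yd)
    also have "\<dots> = cnj q * q * cinner z z + t * cnj t * cinner e e"
      unfolding fa_expand by (simp add: fa_def cinner_smult_left cinner_smult_right e(1) ez mult_ac)
    also have "\<dots> = complex_of_real ((cmod q)^2 + s^2 * (norm e)^2)"
    proof -
      have qq: "cnj q * q = complex_of_real ((cmod q)^2)" by (metis complex_norm_square mult.commute)
      show ?thesis unfolding zz ee tt qq by simp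
    qed
    also have "\<dots> = 1"
    proof -
      have "(cmod q)^2 + s^2 * (norm e)^2 = 1" using e(2) s2 by linarith
      thus ?thesis by (simp only: of_real_1)
    qed
    finally have "complex_of_real ((norm y)^2) = 1" using cinner_self[of y] by simp
    hence "(norm y)^2 = 1" by (metis of_real_eq_1_iff)
    hence "norm y = 1" using norm_ge_zero[of y] by (simp add: power2_eq_1_iff)
    moreover have "cinner z y = q"
      by (simp add: yd cinner_add_right cinner_smult_right zz e(1))
    ultimately show ?thesis by simp
  qed
  define t where "t = complex_of_real s"
  have tt: "t * cnj t = complex_of_real (s^2)" "(-t) * cnj (-t) = complex_of_real (s^2)"
    by (simp_all add: t_def power2_eq_square)
  define y1 where "y1 = cnj q *s z + t *s e"
  define y2 where "y2 = cnj q *s z + (-t) *s e"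
  have y1: "norm y1 = 1 \<and> cinner z y1 = q" by (rule y_ok[OF y1_def tt(1)])
  have y2: "norm y2 = 1 \<and> cinner z y2 = q" by (rule y_ok[OF y2_def tt(2)])
  have sum: "fa A z y1 + fa A z y2 = 2 * q * fa A z z"
    unfolding fa_def y1_def y2_def cinner_add_right cinner_smult_right by simp
  have "2 * (cmod q * cmod (fa A z z)) = cmod (fa A z y1 + fa A z y2)"
    unfolding sum by (simp add: norm_mult fa_def)
  also have "\<dots> \<le> cmod (fa A z y1) + cmod (fa A z y2)" by (rule norm_triangle_ineq)
  also have "\<dots> \<le> qnumradius q A + qnumradius q A"
    using wq_upper[OF nz, of y1 q A] wq_upper[OF nz, of y2 q A] y1 y2 by simp
  finally show ?thesis by simp
qed

lemma Pi_s_hyp: "A \<in> Pi_s \<alpha> \<Longrightarrow> norm z = 1 \<Longrightarrow> fa A z z \<in> sector \<alpha>"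
  unfolding Pi_s_def numrange_def fa_def by blast

lemma card1_inner:
  assumes "CARD('n) < 2" "norm (x::complex^'n) = 1" "norm y = 1"
  shows "cmod (cinner x y) = 1"
proof -
  obtain i :: 'n where True by simp
  have "CARD('n) \<le> 1" using assms by simp
  hence "\<forall>j::'n. j = i" using card_le_Suc0_iff_eq[of "UNIV::'n set"] by auto
  hence U: "UNIV = {i}" by auto
  have nx: "norm x = cmod (x $ i)" "norm y = cmod (y $ i)"
    by (simp_all add: norm_vec_def L2_set_def U)
  have "cinner x y = x $ i * cnj (y $ i)" by (simp add: cinner_def U)
  thus ?thesis using assms nx by (simp add: norm_mult)
qed

lemma main_pos:
  fixes q :: complex and A B :: "complex^'n^'n"
  assumes q0: "0 < cmod q" and q1: "cmod q \<le> 1"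
    and a0: "0 < \<alpha>" and a1: "\<alpha> < pi/2" and A: "A \<in> Pi_s \<alpha>" and B: "B \<in> Pi_s \<alpha>"
  shows "(cmod q)^2 * qnumradius q (A ** B) \<le> (1 / (cos \<alpha>)^2) * qnumradius q A * qnumradius q B"
proof -
  have cp: "cos \<alpha> > 0" using a0 a1 by (simp add: cos_gt_zero_pi)
  have RHS0: "0 \<le> (1 / (cos \<alpha>)^2) * qnumradius q A * qnumradius q B"
    by (simp add: wq_nonneg)
  show ?thesis
  proof (cases "cmod q < 1 \<and> CARD('n) < 2")
    case True
    have E: "{cmod (cinner ((A ** B) *v x) y) | x y. norm x = 1 \<and> norm y = 1 \<and> cinner x y = q} = {}"
      using card1_inner[of x y] True by (auto dest: card1_inner)
    have "qnumradius q (A ** B) = 0" unfolding qnumradius_def E by simp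
    thus ?thesis using RHS0 by simp
  next
    case False
    hence card: "cmod q = 1 \<or> 2 \<le> CARD('n)" using q1 by auto
    define MA where "MA = qnumradius q A / cmod q"
    define MB where "MB = qnumradius q B / cmod q"
    have bA: "Re (fa A z z) \<le> MA" if "norm z = 1" for z
    proof -
      have "cmod q * cmod (fa A z z) \<le> qnumradius q A" by (rule wq_Q[OF q1 card that])
      hence "cmod (fa A z z) \<le> MA" using q0 by (simp add: MA_def pos_le_divide_eq mult.commute)
      thus ?thesis using complex_Re_le_cmod[of "fa A z z"] by linarith
    qed
    have bB: "Re (fa B z z) \<le> MB" if "norm z = 1" for z
    proof -
      have "cmod q * cmod (fa B z z) \<le> qnumradius q B" by (rule wq_Q[OF q1 card that])
      hence "cmod (fa B z z) \<le> MB" using q0 by (simp add: MB_def pos_le_divide_eq mult.commute)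
      thus ?thesis using complex_Re_le_cmod[of "fa B z z"] by linarith
    qed
    have MA0: "0 \<le> MA" "0 \<le> MB" using q0 by (simp_all add: MA_def MB_def wq_nonneg)
    have "qnumradius q (A ** B) \<le> MA * MB / (cos \<alpha>)^2"
      unfolding qnumradius_def
    proof (rule cSup_least)
      fix r assume "r \<in> insert 0 {cmod (cinner ((A ** B) *v x) y) | x y. norm x = 1 \<and> norm y = 1 \<and> cinner x y = q}"
      thus "r \<le> MA * MB / (cos \<alpha>)^2"
      proof
        assume "r = 0" thus ?thesis using MA0 by simp
      next
        assume "r \<in> {cmod (cinner ((A ** B) *v x) y) | x y. norm x = 1 \<and> norm y = 1 \<and> cinner x y = q}"
        then obtain x y where r: "r = cmod (fa (A ** B) x y)" "norm x = 1" "norm y = 1"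
          unfolding fa_def by blast
        have "r * (cos \<alpha>)^2 \<le> MA * MB" unfolding r(1)
          by (rule bound_AB[OF a0 a1 Pi_s_hyp[OF A] Pi_s_hyp[OF B] bA bB r(2,3)])
        thus ?thesis using cp by (simp add: pos_le_divide_eq)
      qed
    qed simp
    hence "(cmod q)^2 * qnumradius q (A ** B) \<le> (cmod q)^2 * (MA * MB / (cos \<alpha>)^2)"
      by (rule mult_left_mono) simp
    also have "\<dots> = (1 / (cos \<alpha>)^2) * qnumradius q A * qnumradius q B"
      using q0 by (simp add: MA_def MB_def power2_eq_square field_simps)
    finally show ?thesis .
  qed
qed

lemma lim_arg:
  fixes X Y :: real
  assumes Y0: "0 \<le> Y" and h: "\<And>a. 0 < a \<Longrightarrow> a < pi/2 \<Longrightarrow> X \<le> (1 / (cos a)^2) * Y"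
  shows "X \<le> Y"
proof (rule ccontr)
  assume "\<not> X \<le> Y"
  hence XY: "Y < X" by simp
  hence Xp: "0 < X" using Y0 by simp
  define r where "r = (1 + Y / X) / 2"
  have r1: "Y / X < r" "r < 1" "0 < r" using XY Xp Y0 by (simp_all add: r_def field_simps)
  define a where "a = arccos (sqrt r)"
  have sr: "0 < sqrt r" "sqrt r < 1" using r1 by simp_all
  have ca: "cos a = sqrt r" unfolding a_def by (rule cos_arccos) (use sr in linarith)+
  have "0 < a" unfolding a_def using arccos_less_arccos[of "sqrt r" 1] sr by simp
  moreover have "a < pi/2" unfolding a_def using arccos_less_arccos[of 0 "sqrt r"] sr by simp
  ultimately have "X \<le> (1 / (cos a)^2) * Y" by (rule h)
  also have "\<dots> = Y / r" using r1 by (simp add: ca)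
  finally have "X * r \<le> Y" using r1 by (simp add: pos_le_divide_eq)
  moreover have "Y < X * r" using r1 Xp by (simp add: divide_less_eq mult.commute)
  ultimately show False by simp
qed

theorem corollary2p12:
  fixes q :: complex and A B :: "complex^'n^'n"
  assumes "0 < cmod q" and "cmod q \<le> 1"
  shows "(\<forall>\<alpha>. 0 \<le> \<alpha> \<and> \<alpha> < pi / 2 \<and> A \<in> Pi_s \<alpha> \<and> B \<in> Pi_s \<alpha> \<longrightarrow>
            (cmod q)^2 * qnumradius q (A ** B)
              \<le> (1 / (cos \<alpha>)^2) * qnumradius q A * qnumradius q B)
       \<and> (A \<in> Pi_s 0 \<and> B \<in> Pi_s 0 \<longrightarrow>
            (cmod q)^2 * qnumradius q (A ** B) \<le> qnumradius q A * qnumradius q B)"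
proof -
  have zero: "(cmod q)^2 * qnumradius q (A ** B) \<le> qnumradius q A * qnumradius q B"
    if A: "A \<in> Pi_s 0" and B: "B \<in> Pi_s 0"
  proof (rule lim_arg)
    show "0 \<le> qnumradius q A * qnumradius q B" by (simp add: wq_nonneg)
  next
    fix a :: real assume a0: "0 < a" and a1: "a < pi/2"
    have sub: "Pi_s 0 \<subseteq> Pi_s a"
    proof -
      have "tan a > 0" using a0 a1 by (simp add: tan_gt_zero)
      hence "sector 0 \<subseteq> sector a" by (auto simp: sector_def)
      thus ?thesis by (auto simp: Pi_s_def)
    qed
    have "(cmod q)^2 * qnumradius q (A ** B) \<le> (1 / (cos a)^2) * qnumradius q A * qnumradius q B"
      by (rule main_pos[OF assms a0 a1]) (use A B sub in auto)
    thus "(cmod q)^2 * qnumradius q (A ** B) \<le> (1 / (cos a)^2) * (qnumradius q A * qnumradius q B)"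
      by (simp add: mult.assoc)
  qed
  show ?thesis
  proof (intro conjI allI impI)
    fix \<alpha> :: real
    assume h: "0 \<le> \<alpha> \<and> \<alpha> < pi / 2 \<and> A \<in> Pi_s \<alpha> \<and> B \<in> Pi_s \<alpha>"
    show "(cmod q)^2 * qnumradius q (A ** B) \<le> (1 / (cos \<alpha>)^2) * qnumradius q A * qnumradius q B"
    proof (cases "\<alpha> = 0")
      case True thus ?thesis using zero h by simp
    next
      case False thus ?thesis using main_pos[OF assms, of \<alpha> A B] h by simp
    qed
  next
    assume "A \<in> Pi_s 0 \<and> B \<in> Pi_s 0"
    thus "(cmod q)^2 * qnumradius q (A ** B) \<le> qnumradius q A * qnumradius q B" using zero by blast
  qed
qed

end
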